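(* Let $K,L,E\subset\mathbb{R}^n$ be convex bodies with $0$ in the interior of $E$, let $u:\mathbb{R}_{\geqslant0}\to\mathbb{R}$ be strictly increasing, and let $p>1$. Then for all $\lambda\in(0,1)$, \[ \mathcal{W}_u\bigl((1-\lambda)\cdot K+_p\lambda\cdot L;E\bigr)^{p/n}\geqslant\frac{1}{(n!)^{p/n}}\Bigl((1-\lambda)\mathcal{W}_u(K;E)^{p/n}+\lambda\mathcal{W}_u(L;E)^{p/n}\Bigr). \]
   Context: For convex bodies $K,E$ with $0\in\mathrm{int}\,E$, $d_E(x,K)=\min\{t\geqslant0: x\in K+tE\}$ and the generalized Wills functional is $\mathcal{W}_u(K;E)=\int_{\mathbb{R}^n}e^{-u(d_E(x,K))}\,\mathrm{d}x$. Convex body: nonempty compact convex set. For $p>1$, $1/p+1/q=1$; $K+_pL=\{(1-\mu)^{1/q}x+\mu^{1/q}y: x\in K, y\in L, \mu\in[0,1]\}$, $\lambda\cdot K=\lambda^{1/p}K$. *)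

theory Defs
  imports "HOL-Analysis.Analysis"
begin

definition convex_body :: "'a::euclidean_space set \<Rightarrow> bool" where
  "convex_body K \<longleftrightarrow> K \<noteq> {} \<and> compact K \<and> convex K"

definition gdist :: "'a::euclidean_space set \<Rightarrow> 'a \<Rightarrow> 'a set \<Rightarrow> real" where
  "gdist E x K = Inf {t. t \<ge> 0 \<and> x \<in> {k + t *\<^sub>R e | k e. k \<in> K \<and> e \<in> E}}"

definition wills :: "(real \<Rightarrow> real) \<Rightarrow> 'a::euclidean_space set \<Rightarrow> 'a set \<Rightarrow> ennreal" where
  "wills u K E = (\<integral>\<^sup>+ x. ennreal (exp (- u (gdist E x K))) \<partial>lborel)"

text \<open>L_p Minkowski combination (1-lambda).K +_p lambda.L, with lambda.K = lambda^(1/p) K\<close>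
definition lp_comb :: "real \<Rightarrow> real \<Rightarrow> 'a::euclidean_space set \<Rightarrow> 'a set \<Rightarrow> 'a set" where
  "lp_comb p lam K L =
     (let q = p / (p - 1) in
      {(1 - \<mu>) powr (1/q) *\<^sub>R ((1 - lam) powr (1/p) *\<^sub>R x) + \<mu> powr (1/q) *\<^sub>R (lam powr (1/p) *\<^sub>R y)
        | x y \<mu>. x \<in> K \<and> y \<in> L \<and> 0 \<le> \<mu> \<and> \<mu> \<le> 1})"

definition epowr :: "ennreal \<Rightarrow> real \<Rightarrow> ennreal" where
  "epowr x r = (if x = (\<infinity>::ennreal) then \<infinity> else ennreal (enn2real x powr r))"

end

theory Submission
  imports Defs
begin


definition gS :: "'a::euclidean_space set \<Rightarrow> 'a \<Rightarrow> 'a set \<Rightarrow> real set" where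
  "gS E x K = {t. t \<ge> 0 \<and> x \<in> {k + t *\<^sub>R e | k e. k \<in> K \<and> e \<in> E}}"

lemma gdist_gS: "gdist E x K = Inf (gS E x K)"
  by (simp add: gdist_def gS_def)

lemma convex0_comb:
  fixes E :: "'a::real_vector set"
  assumes "convex E" "0 \<in> E" "c1 \<ge> 0" "c2 \<ge> 0" "c1 + c2 \<le> 1" "e1 \<in> E" "e2 \<in> E"
  shows "c1 *\<^sub>R e1 + c2 *\<^sub>R e2 \<in> E"
proof (cases "c1 + c2 = 0")
  case True
  then have "c1 = 0" "c2 = 0" using assms by auto
  then show ?thesis using assms by simp
next
  case False
  define s where "s = c1 + c2"
  have s: "s > 0" "s \<le> 1" unfolding s_def using False assms by linarith+
  have w: "(c1/s) *\<^sub>R e1 + (c2/s) *\<^sub>R e2 \<in> E"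
  proof -
    have sum: "c1/s + c2/s = 1" using s by (simp add: add_divide_distrib[symmetric] s_def)
    show ?thesis using assms s sum by (intro convexD[OF assms(1)]) auto
  qed
  have "s *\<^sub>R ((c1/s) *\<^sub>R e1 + (c2/s) *\<^sub>R e2) + (1 - s) *\<^sub>R 0 \<in> E"
    by (rule convexD[OF assms(1) w assms(2)]) (use s in auto)
  moreover have "s *\<^sub>R ((c1/s) *\<^sub>R e1 + (c2/s) *\<^sub>R e2) + (1 - s) *\<^sub>R 0 = c1 *\<^sub>R e1 + c2 *\<^sub>R e2"
    using s by (simp add: scaleR_add_right)
  ultimately show ?thesis by simp
qed

lemma gS_nonneg: "t \<in> gS E x K \<Longrightarrow> t \<ge> 0" by (simp add: gS_def)

lemma gS_bdd: "bdd_below (gS E x K)"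
  by (rule bdd_belowI[of _ 0]) (simp add: gS_def)

lemma gS_nonempty:
  assumes "K \<noteq> {}" "0 \<in> interior E"
  shows "gS E x K \<noteq> {}"
proof -
  obtain k where k: "k \<in> K" using assms by auto
  obtain r where r: "r > 0" "cball 0 r \<subseteq> E" using assms(2) mem_interior_cball by blast
  show ?thesis
  proof (cases "x = k")
    case True
    have "x = k + 0 *\<^sub>R (0::'a)" "(0::'a) \<in> E" using True r by auto
    then have "0 \<in> gS E x K" using k unfolding gS_def by blast
    then show ?thesis by auto
  next
    case False
    define t where "t = norm (x - k) / r"
    have t: "t > 0" using False r by (simp add: t_def)
    have "(1/t) *\<^sub>R (x - k) \<in> cball 0 r" using t r by (simp add: t_def)
    then have "(1/t) *\<^sub>R (x - k) \<in> E" using r by auto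
    moreover have "x = k + t *\<^sub>R ((1/t) *\<^sub>R (x - k))" using t by simp
    ultimately have "t \<in> gS E x K" using k t unfolding gS_def by force
    then show ?thesis by auto
  qed
qed

lemma gdist_nonneg:
  assumes "K \<noteq> {}" "0 \<in> interior E"
  shows "gdist E x K \<ge> 0"
  unfolding gdist_gS using gS_nonempty[OF assms] by (intro cInf_greatest) (auto simp: gS_def)

lemma gdist_le: "t \<in> gS E x K \<Longrightarrow> gdist E x K \<le> t"
  unfolding gdist_gS by (rule cInf_lower[OF _ gS_bdd])

lemma gdist_approx:
  assumes "K \<noteq> {}" "0 \<in> interior E" "\<epsilon> > 0"
  obtains t where "t \<in> gS E x K" "t < gdist E x K + \<epsilon>"
  using cInf_lessD[of "gS E x K" "gdist E x K + \<epsilon>"] gS_nonempty[OF assms(1,2)] assms(3)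
  unfolding gdist_gS by force

lemma gS_comb:
  assumes "convex E" "0 \<in> E" "\<alpha> \<ge> 0" "\<beta> \<ge> 0" "\<alpha> + \<beta> \<le> 1"
    and M: "\<And>k l. k \<in> K \<Longrightarrow> l \<in> L \<Longrightarrow> \<alpha> *\<^sub>R k + \<beta> *\<^sub>R l \<in> M"
    and t1: "t1 \<in> gS E x K" and t2: "t2 \<in> gS E y L"
  shows "max t1 t2 \<in> gS E (\<alpha> *\<^sub>R x + \<beta> *\<^sub>R y) M"
proof -
  obtain k e1 where k: "k \<in> K" "e1 \<in> E" "x = k + t1 *\<^sub>R e1" "t1 \<ge> 0" using t1 by (auto simp: gS_def)
  obtain l e2 where l: "l \<in> L" "e2 \<in> E" "y = l + t2 *\<^sub>R e2" "t2 \<ge> 0" using t2 by (auto simp: gS_def)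
  define T where "T = max t1 t2"
  have eq: "\<alpha> *\<^sub>R x + \<beta> *\<^sub>R y = (\<alpha> *\<^sub>R k + \<beta> *\<^sub>R l) + ((\<alpha> * t1) *\<^sub>R e1 + (\<beta> * t2) *\<^sub>R e2)"
    using k l by (simp add: algebra_simps)
  show ?thesis
  proof (cases "T = 0")
    case True
    then have "t1 = 0" "t2 = 0" using k l by (auto simp: T_def max_def split: if_splits)
    then show ?thesis using eq M[OF k(1) l(1)] assms(2) unfolding gS_def T_def
      by (auto intro!: exI[of _ "\<alpha> *\<^sub>R k + \<beta> *\<^sub>R l"] exI[of _ 0])
  next
    case False
    then have T: "T > 0" using k l by (auto simp: T_def)
    have "((\<alpha> * t1)/T) *\<^sub>R e1 + ((\<beta> * t2)/T) *\<^sub>R e2 \<in> E"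
    proof (rule convex0_comb[OF assms(1,2)])
      have "\<alpha> * t1 \<le> \<alpha> * T" "\<beta> * t2 \<le> \<beta> * T"
        using assms by (auto simp: T_def intro!: mult_left_mono)
      then have "\<alpha> * t1 + \<beta> * t2 \<le> (\<alpha> + \<beta>) * T" by (simp add: distrib_right)
      also have "\<dots> \<le> 1 * T" using assms T by (intro mult_right_mono) auto
      finally have "\<alpha> * t1 + \<beta> * t2 \<le> T" by simp
      then show "\<alpha> * t1 / T + \<beta> * t2 / T \<le> 1" using T by (simp add: add_divide_distrib[symmetric])
    qed (use assms k l T in auto)
    moreover have "(\<alpha> * t1) *\<^sub>R e1 + (\<beta> * t2) *\<^sub>R e2 = T *\<^sub>R (((\<alpha> * t1)/T) *\<^sub>R e1 + ((\<beta> * t2)/T) *\<^sub>R e2)"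
      using T by (simp add: scaleR_add_right)
    ultimately show ?thesis using eq M[OF k(1) l(1)] T unfolding gS_def T_def[symmetric]
      by force
  qed
qed

lemma gdist_comb:
  assumes "convex E" "0 \<in> interior E" "\<alpha> \<ge> 0" "\<beta> \<ge> 0" "\<alpha> + \<beta> \<le> 1" "K \<noteq> {}" "L \<noteq> {}"
    and M: "\<And>k l. k \<in> K \<Longrightarrow> l \<in> L \<Longrightarrow> \<alpha> *\<^sub>R k + \<beta> *\<^sub>R l \<in> M"
  shows "gdist E (\<alpha> *\<^sub>R x + \<beta> *\<^sub>R y) M \<le> max (gdist E x K) (gdist E y L)"
proof (rule field_le_epsilon)
  fix \<epsilon> :: real assume e: "\<epsilon> > 0"
  obtain t1 where t1: "t1 \<in> gS E x K" "t1 < gdist E x K + \<epsilon>" using gdist_approx[OF assms(6,2) e] by blast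
  obtain t2 where t2: "t2 \<in> gS E y L" "t2 < gdist E y L + \<epsilon>" using gdist_approx[OF assms(7,2) e] by blast
  have "0 \<in> E" using assms(2) interior_subset by blast
  have "gdist E (\<alpha> *\<^sub>R x + \<beta> *\<^sub>R y) M \<le> max t1 t2"
    by (rule gdist_le, rule gS_comb[OF assms(1) \<open>0 \<in> E\<close> assms(3-5) M t1(1) t2(1)])
  then show "gdist E (\<alpha> *\<^sub>R x + \<beta> *\<^sub>R y) M \<le> max (gdist E x K) (gdist E y L) + \<epsilon>"
    using t1 t2 by linarith
qed



lemma gdist_lip:
  assumes "K \<noteq> {}" "convex E" "r > 0" "cball 0 r \<subseteq> E"
  shows "gdist E (x + z) K \<le> gdist E x K + norm z / r"
proof (rule field_le_epsilon)
  fix \<epsilon> :: real assume e: "\<epsilon> > 0"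
  have "ball 0 r \<subseteq> E" using assms(4) ball_subset_cball by blast
  then have "ball 0 r \<subseteq> interior E" by (simp add: interior_maximal)
  then have int: "0 \<in> interior E" using assms(3) by auto
  have E0: "0 \<in> E" using assms(3,4) by auto
  obtain t where t: "t \<in> gS E x K" "t < gdist E x K + \<epsilon>" using gdist_approx[OF assms(1) int e] by blast
  obtain k e1 where k: "k \<in> K" "e1 \<in> E" "x = k + t *\<^sub>R e1" "t \<ge> 0" using t by (auto simp: gS_def)
  have "t + norm z / r \<in> gS E (x + z) K"
  proof (cases "z = 0")
    case True then show ?thesis using t by simp
  next
    case False
    define e' where "e' = (r / norm z) *\<^sub>R z"
    have "e' \<in> cball 0 r" using False assms(3) by (simp add: e'_def)
    then have e': "e' \<in> E" using assms(4) by auto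
    define T where "T = t + norm z / r"
    have T: "T > 0" using False assms(3) k(4) by (simp add: T_def add_nonneg_pos)
    have sum1: "t / T + (norm z / r) / T = 1"
      using T unfolding add_divide_distrib[symmetric] by (simp add: T_def)
    have w: "(t / T) *\<^sub>R e1 + ((norm z / r) / T) *\<^sub>R e' \<in> E"
      apply (rule convex0_comb[OF assms(2) E0 _ _ _ k(2) e'])
      using T k(4) assms(3) sum1 by auto
    have "x + z = k + T *\<^sub>R ((t / T) *\<^sub>R e1 + ((norm z / r) / T) *\<^sub>R e')"
      using T False assms(3) k(3) by (simp add: scaleR_add_right e'_def)
    then show ?thesis using w k(1) T unfolding gS_def T_def by force
  qed
  then have "gdist E (x + z) K \<le> t + norm z / r" by (rule gdist_le)
  then show "gdist E (x + z) K \<le> gdist E x K + norm z / r + \<epsilon>" using t by linarith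
qed

lemma gdist_cont:
  assumes "K \<noteq> {}" "convex E" "0 \<in> interior E"
  shows "continuous_on UNIV (\<lambda>x. gdist E x K)"
proof -
  obtain r where r: "r > 0" "cball 0 r \<subseteq> E" using assms(3) mem_interior_cball by blast
  have "(1/r)-lipschitz_on UNIV (\<lambda>x. gdist E x K)"
  proof (rule lipschitz_onI)
    fix x y :: 'a
    have 1: "gdist E y K \<le> gdist E x K + norm (y - x) / r"
      using gdist_lip[OF assms(1,2) r, of x "y - x"] by simp
    have 2: "gdist E x K \<le> gdist E y K + norm (x - y) / r"
      using gdist_lip[OF assms(1,2) r, of y "x - y"] by simp
    show "dist (gdist E x K) (gdist E y K) \<le> 1 / r * dist x y"
      using 1 2 by (simp add: dist_real_def dist_norm norm_minus_commute abs_le_iff)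
  qed (use r in auto)
  then show ?thesis by (rule lipschitz_on_continuous_on)
qed

definition phi :: "(real \<Rightarrow> real) \<Rightarrow> real \<Rightarrow> real" where "phi u t = exp (- u t)"

lemma wills_phi: "wills u K E = (\<integral>\<^sup>+ x. ennreal (phi u (gdist E x K)) \<partial>lborel)"
  by (simp add: wills_def phi_def)

lemma phi_pos: "phi u t > 0" by (simp add: phi_def)

lemma phi_anti:
  assumes "strict_mono_on {0..} u" "0 \<le> a" "a \<le> b"
  shows "phi u b \<le> phi u a"
  using strict_mono_on_leD[OF assms(1), of a b] assms by (simp add: phi_def)

lemma phi_max:
  assumes "strict_mono_on {0..} u" "0 \<le> d" "d \<le> max d1 d2" "0 \<le> d1" "0 \<le> d2"
  shows "min (phi u d1) (phi u d2) \<le> phi u d"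
proof (cases "d1 \<le> d2")
  case True
  then have "phi u d2 \<le> phi u d" using phi_anti[OF assms(1,2)] assms by auto
  then show ?thesis by linarith
next
  case False
  then have "phi u d1 \<le> phi u d" using phi_anti[OF assms(1,2)] assms by auto
  then show ?thesis by linarith
qed

lemma phi_borel:
  assumes "strict_mono_on {0..} u" "K \<noteq> {}" "convex E" "0 \<in> interior E"
  shows "(\<lambda>x. phi u (gdist E x K)) \<in> borel_measurable borel"
proof -
  have "mono (\<lambda>t. u (max 0 t))"
    by (rule monoI) (auto intro!: strict_mono_on_leD[OF assms(1)])
  then have [measurable]: "(\<lambda>t. u (max 0 t)) \<in> borel_measurable borel"
    by (rule borel_measurable_mono)
  have [measurable]: "(\<lambda>x. gdist E x K) \<in> borel_measurable borel"
    by (rule borel_measurable_continuous_onI[OF gdist_cont[OF assms(2-4)]])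
  have m: "(\<lambda>x. exp (- u (max 0 (gdist E x K)))) \<in> borel_measurable borel"
    by measurable
  moreover have "(\<lambda>x. exp (- u (max 0 (gdist E x K)))) = (\<lambda>x. phi u (gdist E x K))"
    using gdist_nonneg[OF assms(2,4)] by (auto simp: phi_def max_def)
  ultimately show ?thesis by simp
qed

definition lev :: "(real \<Rightarrow> real) \<Rightarrow> 'a::euclidean_space set \<Rightarrow> 'a set \<Rightarrow> real \<Rightarrow> 'a set" where
  "lev u E X s = {x. s < phi u (gdist E x X)}"

lemma lev_sets:
  assumes "strict_mono_on {0..} u" "K \<noteq> {}" "convex E" "0 \<in> interior E"
  shows "lev u E K s \<in> sets lborel"
proof -
  have [measurable]: "(\<lambda>x. phi u (gdist E x K)) \<in> borel_measurable borel"
    by (rule phi_borel[OF assms])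
  show ?thesis unfolding lev_def by measurable
qed

lemma lev_comb:
  assumes "strict_mono_on {0..} u" "convex E" "0 \<in> interior E" "\<alpha> \<ge> 0" "\<beta> \<ge> 0" "\<alpha> + \<beta> \<le> 1"
    "K \<noteq> {}" "L \<noteq> {}" "M \<noteq> {}"
    and M: "\<And>k l. k \<in> K \<Longrightarrow> l \<in> L \<Longrightarrow> \<alpha> *\<^sub>R k + \<beta> *\<^sub>R l \<in> M"
    and x: "x \<in> lev u E K s" and y: "y \<in> lev u E L s"
  shows "\<alpha> *\<^sub>R x + \<beta> *\<^sub>R y \<in> lev u E M s"
proof -
  have "min (phi u (gdist E x K)) (phi u (gdist E y L)) \<le> phi u (gdist E (\<alpha> *\<^sub>R x + \<beta> *\<^sub>R y) M)"
    by (rule phi_max[OF assms(1) gdist_nonneg[OF assms(9,3)] gdist_comb[OF assms(2,3,4,5,6,7,8) M]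
          gdist_nonneg[OF assms(7,3)] gdist_nonneg[OF assms(8,3)]])
  then show ?thesis using x y by (auto simp: lev_def)
qed

lemma lev_convex:
  assumes "strict_mono_on {0..} u" "convex E" "0 \<in> interior E" "convex K" "K \<noteq> {}"
  shows "convex (lev u E K s)"
proof (rule convexI)
  fix x y and a b :: real
  assume xy: "x \<in> lev u E K s" "y \<in> lev u E K s" and ab: "0 \<le> a" "0 \<le> b" "a + b = 1"
  show "a *\<^sub>R x + b *\<^sub>R y \<in> lev u E K s"
    by (rule lev_comb[OF assms(1,2,3) ab(1,2) _ assms(5,5,5) _ xy])
       (use ab assms(4) in \<open>auto intro: convexD\<close>)
qed

lemma gdist_self:
  assumes "k \<in> K" "0 \<in> interior E"
  shows "gdist E k K = 0"
proof -
  have "k = k + 0 *\<^sub>R (0::'a)" "(0::'a) \<in> E" using assms interior_subset by auto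
  then have "0 \<in> gS E k K" using assms unfolding gS_def by blast
  then show ?thesis using gdist_le[of 0] gdist_nonneg[of K E k] assms by force
qed

lemma lev_nonempty:
  assumes "0 \<in> interior E" "K \<noteq> {}" "s < phi u 0"
  shows "lev u E K s \<noteq> {}"
proof -
  obtain k where "k \<in> K" using assms by auto
  then have "k \<in> lev u E K s" using assms gdist_self[OF _ assms(1)] by (auto simp: lev_def)
  then show ?thesis by auto
qed

lemma lev_empty:
  assumes "strict_mono_on {0..} u" "0 \<in> interior E" "K \<noteq> {}" "phi u 0 \<le> s"
  shows "lev u E K s = {}"
proof -
  have h: "\<And>x. phi u (gdist E x K) \<le> phi u 0"
    by (rule phi_anti[OF assms(1) order.refl gdist_nonneg[OF assms(3,2)]])
  { fix x assume "x \<in> lev u E K s" then have False using h[of x] assms(4) by (simp add: lev_def) }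
  then show ?thesis by blast
qed

lemma lev_univ:
  assumes "strict_mono_on {0..} u" "0 \<in> interior E" "K \<noteq> {}" "\<forall>T\<ge>0. s < phi u T"
  shows "lev u E K s = UNIV"
  using assms gdist_nonneg[OF assms(3,2)] by (auto simp: lev_def)

lemma lev_bounded:
  assumes "strict_mono_on {0..} u" "0 \<in> interior E" "K \<noteq> {}" "bounded K" "bounded E"
    and T: "T \<ge> 0" "phi u T \<le> s"
  shows "bounded (lev u E K s)"
proof -
  obtain BK where BK: "\<And>k. k \<in> K \<Longrightarrow> norm k \<le> BK" using assms(4) bounded_iff by blast
  obtain BE where BE: "\<And>e. e \<in> E \<Longrightarrow> norm e \<le> BE" using assms(5) bounded_iff by blast
  have BE0: "BE \<ge> 0" using BE[of 0] assms(2) interior_subset by force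
  show ?thesis unfolding bounded_iff
  proof (intro exI ballI)
    fix x assume x: "x \<in> lev u E K s"
    have "gdist E x K < T"
    proof (rule ccontr)
      assume "\<not> gdist E x K < T"
      then have "phi u (gdist E x K) \<le> phi u T" using phi_anti[OF assms(1) T(1)] by simp
      then show False using x T by (auto simp: lev_def)
    qed
    then obtain t where t: "t \<in> gS E x K" "t < T"
      using gdist_approx[OF assms(3,2), of "T - gdist E x K" x] by auto
    obtain k e where ke: "k \<in> K" "e \<in> E" "x = k + t *\<^sub>R e" "t \<ge> 0" using t by (auto simp: gS_def)
    have "norm x \<le> norm k + t * norm e" using ke by (simp add: norm_triangle_le)
    also have "\<dots> \<le> BK + T * BE"
      using BK[OF ke(1)] BE[OF ke(2)] t(2) ke(4) BE0
      by (intro add_mono mult_mono) auto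
    finally show "norm x \<le> BK + T * BE" .
  qed
qed



lemma emeasure_lborel_affine_open:
  fixes S :: "'a::euclidean_space set"
  assumes "S \<in> sets lborel" "(\<lambda>x. m *\<^sub>R x + d) ` S \<in> sets lborel"
  shows "emeasure lborel ((\<lambda>x. m *\<^sub>R x + d) ` S) = ennreal (\<bar>m\<bar> ^ DIM('a)) * emeasure lborel S"
proof -
  have "emeasure lebesgue ((\<lambda>x. m *\<^sub>R x + d) ` S) = ennreal (\<bar>m\<bar> ^ DIM('a)) * emeasure lebesgue S"
    by (rule emeasure_lebesgue_affine)
  then show ?thesis using assms by simp
qed

lemma emeasure_interior_convex:
  fixes A :: "'a::euclidean_space set"
  assumes "convex A" "A \<in> sets lborel"
  shows "emeasure lborel (interior A) = emeasure lborel A"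
proof (rule antisym)
  show "emeasure lborel (interior A) \<le> emeasure lborel A"
    by (rule emeasure_mono[OF interior_subset assms(2)])
  have fr: "frontier A \<in> sets lborel" by (simp add: frontier_closed borel_closed)
  have "frontier A \<in> null_sets lebesgue"
    using negligible_convex_frontier[OF assms(1)] by (simp add: negligible_iff_null_sets)
  then have nf: "frontier A \<in> null_sets lborel" using fr null_sets_completion_iff by blast
  have ib: "interior A \<in> sets lborel" by (simp add: borel_open)
  have "A \<subseteq> interior A \<union> frontier A" using closure_subset by (auto simp: frontier_def)
  then have "emeasure lborel A \<le> emeasure lborel (interior A \<union> frontier A)"
    by (intro emeasure_mono) (use fr ib in auto)
  also have "\<dots> \<le> emeasure lborel (interior A) + emeasure lborel (frontier A)"
    by (rule emeasure_subadditive[OF ib fr])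
  also have "\<dots> = emeasure lborel (interior A)" using null_setsD1[OF nf] by simp
  finally show "emeasure lborel A \<le> emeasure lborel (interior A)" .
qed

lemma interior_strict:
  fixes A :: "'a::euclidean_space set"
  assumes "x \<in> interior A" "norm v = 1" "\<forall>y\<in>closure A. y \<bullet> v \<le> a \<bullet> v"
  shows "x \<bullet> v < a \<bullet> v"
proof -
  obtain e where e: "e > 0" "ball x e \<subseteq> A" using assms(1) mem_interior by blast
  have "x + (e/2) *\<^sub>R v \<in> ball x e" using e assms(2) by (simp add: dist_norm)
  then have "x + (e/2) *\<^sub>R v \<in> closure A" using e closure_subset by blast
  then have "(x + (e/2) *\<^sub>R v) \<bullet> v \<le> a \<bullet> v" using assms(3) by blast
  moreover have "v \<bullet> v = 1" using assms(2) by (simp add: norm_eq_1)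
  ultimately show ?thesis using e by (simp add: inner_add_left)
qed

lemma interior_closure_sum:
  fixes A B :: "'a::euclidean_space set"
  assumes "x \<in> interior A" "b \<in> closure B" "\<alpha> > 0" "\<beta> > 0"
  obtains x' b' where "x' \<in> A" "b' \<in> B" "\<alpha> *\<^sub>R x + \<beta> *\<^sub>R b = \<alpha> *\<^sub>R x' + \<beta> *\<^sub>R b'"
proof -
  obtain e where e: "e > 0" "ball x e \<subseteq> A" using assms(1) mem_interior by blast
  obtain b' where b': "b' \<in> B" "dist b' b < \<alpha> * e / \<beta>"
    using assms(2,3,4) e(1) unfolding closure_approachable by (meson divide_pos_pos mult_pos_pos)
  define x' where "x' = x + (\<beta> / \<alpha>) *\<^sub>R (b - b')"
  have "dist x x' = (\<beta> / \<alpha>) * norm (b - b')"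
    using assms by (simp add: x'_def dist_norm)
  also have "\<dots> < (\<beta> / \<alpha>) * (\<alpha> * e / \<beta>)"
    using b' assms by (intro mult_strict_left_mono) (auto simp: dist_norm norm_minus_commute)
  also have "\<dots> = e" using assms by simp
  finally have "x' \<in> A" using e by auto
  moreover have "\<alpha> *\<^sub>R x + \<beta> *\<^sub>R b = \<alpha> *\<^sub>R x' + \<beta> *\<^sub>R b'"
    using assms by (simp add: x'_def scaleR_add_right scaleR_diff_right algebra_simps)
  ultimately show ?thesis using that b' by blast
qed

lemma bm_sum:
  fixes A B C :: "'a::euclidean_space set"
  assumes "convex A" "convex B" "bounded A" "bounded B" "A \<noteq> {}" "B \<noteq> {}"
    and "A \<in> sets lborel" "B \<in> sets lborel" "C \<in> sets lborel" "\<alpha> > 0" "\<beta> > 0"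
    and sub: "\<And>x y. x \<in> A \<Longrightarrow> y \<in> B \<Longrightarrow> \<alpha> *\<^sub>R x + \<beta> *\<^sub>R y \<in> C"
  shows "ennreal (\<alpha> ^ DIM('a)) * emeasure lborel A + ennreal (\<beta> ^ DIM('a)) * emeasure lborel B
         \<le> emeasure lborel C"
proof -
  obtain v :: 'a where v: "v \<in> Basis" using nonempty_Basis by blast
  have nv: "norm v = 1" using v by simp
  have cA: "compact (closure A)" "closure A \<noteq> {}" using assms by (auto simp: compact_closure)
  have cB: "compact (closure B)" "closure B \<noteq> {}" using assms by (auto simp: compact_closure)
  have ct: "continuous_on S (\<lambda>x. x \<bullet> v)" for S :: "'a set" by (intro continuous_intros)
  obtain a where a: "a \<in> closure A" "\<forall>y\<in>closure A. y \<bullet> v \<le> a \<bullet> v"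
    using continuous_attains_sup[OF cA ct] by blast
  obtain b where b: "b \<in> closure B" "\<forall>y\<in>closure B. b \<bullet> v \<le> y \<bullet> v"
    using continuous_attains_inf[OF cB ct] by blast
  have b': "\<forall>y\<in>closure B. y \<bullet> (-v) \<le> b \<bullet> (-v)" using b by auto
  have nv': "norm (-v) = 1" using nv by simp
  define P where "P = (\<lambda>x. \<alpha> *\<^sub>R x + \<beta> *\<^sub>R b) ` interior A"
  define Q where "Q = (\<lambda>y. \<beta> *\<^sub>R y + \<alpha> *\<^sub>R a) ` interior B"
  have Popen: "open P" unfolding P_def
    using open_affinity[OF open_interior[of A], of "\<alpha>" "\<beta> *\<^sub>R b"] assms by (simp add: add.commute)
  have Qopen: "open Q" unfolding Q_def
    using open_affinity[OF open_interior[of B], of "\<beta>" "\<alpha> *\<^sub>R a"] assms by (simp add: add.commute)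
  have PC: "P \<subseteq> C"
  proof
    fix z assume "z \<in> P"
    then obtain x where x: "x \<in> interior A" "z = \<alpha> *\<^sub>R x + \<beta> *\<^sub>R b" by (auto simp: P_def)
    obtain x' b'' where "x' \<in> A" "b'' \<in> B" "\<alpha> *\<^sub>R x + \<beta> *\<^sub>R b = \<alpha> *\<^sub>R x' + \<beta> *\<^sub>R b''"
      using interior_closure_sum[OF x(1) b(1) assms(10,11)] by blast
    then show "z \<in> C" using sub x by auto
  qed
  have QC: "Q \<subseteq> C"
  proof
    fix z assume "z \<in> Q"
    then obtain y where y: "y \<in> interior B" "z = \<beta> *\<^sub>R y + \<alpha> *\<^sub>R a" by (auto simp: Q_def)
    obtain y' a' where "y' \<in> B" "a' \<in> A" "\<beta> *\<^sub>R y + \<alpha> *\<^sub>R a = \<beta> *\<^sub>R y' + \<alpha> *\<^sub>R a'"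
      using interior_closure_sum[OF y(1) a(1) assms(11,10)] by blast
    then show "z \<in> C" using sub y by (auto simp: add.commute)
  qed
  have disj: "P \<inter> Q = {}"
  proof (rule ccontr)
    assume "P \<inter> Q \<noteq> {}"
    then obtain x y where x: "x \<in> interior A" and y: "y \<in> interior B"
      and eq: "\<alpha> *\<^sub>R x + \<beta> *\<^sub>R b = \<beta> *\<^sub>R y + \<alpha> *\<^sub>R a" by (auto simp: P_def Q_def)
    have 1: "x \<bullet> v < a \<bullet> v" by (rule interior_strict[OF x nv a(2)])
    have "y \<bullet> (-v) < b \<bullet> (-v)" by (rule interior_strict[OF y nv' b'])
    then have 2: "b \<bullet> v < y \<bullet> v" by simp
    have "(\<alpha> *\<^sub>R x + \<beta> *\<^sub>R b) \<bullet> v = (\<beta> *\<^sub>R y + \<alpha> *\<^sub>R a) \<bullet> v" using eq by simp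
    then have "\<alpha> * (x \<bullet> v) + \<beta> * (b \<bullet> v) = \<beta> * (y \<bullet> v) + \<alpha> * (a \<bullet> v)"
      by (simp add: inner_add_left)
    moreover have "\<alpha> * (x \<bullet> v) < \<alpha> * (a \<bullet> v)" using 1 assms(10) by simp
    moreover have "\<beta> * (b \<bullet> v) < \<beta> * (y \<bullet> v)" using 2 assms(11) by simp
    ultimately show False by linarith
  qed
  have Ps: "P \<in> sets lborel" using Popen by (simp add: borel_open)
  have Qs: "Q \<in> sets lborel" using Qopen by (simp add: borel_open)
  have iA: "interior A \<in> sets lborel" by (simp add: borel_open)
  have iB: "interior B \<in> sets lborel" by (simp add: borel_open)
  have mP: "emeasure lborel P = ennreal (\<alpha> ^ DIM('a)) * emeasure lborel A"
    using emeasure_lborel_affine_open[OF iA, of \<alpha> "\<beta> *\<^sub>R b"] Ps assms(10)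
      emeasure_interior_convex[OF assms(1,7)] unfolding P_def by simp
  have mQ: "emeasure lborel Q = ennreal (\<beta> ^ DIM('a)) * emeasure lborel B"
    using emeasure_lborel_affine_open[OF iB, of \<beta> "\<alpha> *\<^sub>R a"] Qs assms(11)
      emeasure_interior_convex[OF assms(2,8)] unfolding Q_def by simp
  have "emeasure lborel P + emeasure lborel Q = emeasure lborel (P \<union> Q)"
    by (rule plus_emeasure[OF Ps Qs disj])
  also have "\<dots> \<le> emeasure lborel C" using PC QC assms(9) by (intro emeasure_mono) auto
  finally show ?thesis using mP mQ by simp
qed



lemma layer_cake:
  fixes f :: "'a::euclidean_space \<Rightarrow> real"
  assumes fm[measurable]: "f \<in> borel_measurable borel" and f0: "\<And>x. f x \<ge> 0"
  shows "(\<integral>\<^sup>+x. ennreal (f x) \<partial>lborel) =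
         (\<integral>\<^sup>+s. indicator {0<..} s * emeasure lborel {x. s < f x} \<partial>lborel)"
proof -
  define g where "g x s = (indicator {p. 0 < snd p \<and> snd p < f (fst p)} (x, s) :: ennreal)" for x s
  have gm: "case_prod g \<in> borel_measurable (lborel \<Otimes>\<^sub>M lborel)"
    unfolding g_def by measurable
  have 1: "ennreal (f x) = (\<integral>\<^sup>+s. g x s \<partial>lborel)" for x
  proof -
    have "(\<lambda>s. g x s) = indicator {0<..<f x}" by (auto simp: g_def indicator_def fun_eq_iff)
    then show ?thesis using f0[of x] by simp
  qed
  have 2: "(\<integral>\<^sup>+x. g x s \<partial>lborel) = indicator {0<..} s * emeasure lborel {x. s < f x}" for s
  proof (cases "0 < s")
    case True
    then have "(\<lambda>x. g x s) = indicator {x. s < f x}" by (auto simp: g_def indicator_def fun_eq_iff)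
    moreover have "{x. s < f x} \<in> sets lborel" by measurable
    ultimately show ?thesis using True by simp
  next
    case False
    then have "(\<lambda>x. g x s) = (\<lambda>x. 0)" by (auto simp: g_def indicator_def fun_eq_iff)
    then show ?thesis using False by simp
  qed
  have "(\<integral>\<^sup>+x. ennreal (f x) \<partial>lborel) = (\<integral>\<^sup>+x. (\<integral>\<^sup>+s. g x s \<partial>lborel) \<partial>lborel)"
    using 1 by simp
  also have "\<dots> = (\<integral>\<^sup>+s. (\<integral>\<^sup>+x. g x s \<partial>lborel) \<partial>lborel)"
    by (rule pair_sigma_finite.Fubini'[symmetric, OF _ gm])
       (simp add: pair_sigma_finite.intro lborel.sigma_finite_measure_axioms)
  also have "\<dots> = (\<integral>\<^sup>+s. indicator {0<..} s * emeasure lborel {x. s < f x} \<partial>lborel)"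
    using 2 by simp
  finally show ?thesis .
qed



lemma layer_meas:
  fixes f :: "'a::euclidean_space \<Rightarrow> real"
  assumes fm[measurable]: "f \<in> borel_measurable borel"
  shows "(\<lambda>s. indicator {0<..} s * emeasure lborel {x. s < f x}) \<in> borel_measurable lborel"
proof -
  define h where "h p = (indicator {p. 0 < fst p \<and> fst p < f (snd p)} p :: ennreal)" for p :: "real \<times> 'a"
  have hm: "h \<in> borel_measurable (lborel \<Otimes>\<^sub>M lborel)" unfolding h_def by measurable
  have "(\<lambda>s. \<integral>\<^sup>+ x. h (s, x) \<partial>(lborel::'a measure)) \<in> borel_measurable lborel"
    by (rule lborel.borel_measurable_nn_integral_fst[OF hm])
  moreover have "(\<integral>\<^sup>+ x. h (s, x) \<partial>(lborel::'a measure)) = indicator {0<..} s * emeasure lborel {x. s < f x}" for s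
  proof (cases "0 < s")
    case True
    then have "(\<lambda>x. h (s, x)) = indicator {x. s < f x}" by (auto simp: h_def indicator_def fun_eq_iff)
    moreover have "{x. s < f x} \<in> sets lborel" by measurable
    ultimately show ?thesis using True by simp
  next
    case False
    then have "(\<lambda>x. h (s, x)) = (\<lambda>x. 0)" by (auto simp: h_def indicator_def fun_eq_iff)
    then show ?thesis using False by simp
  qed
  ultimately show ?thesis by simp
qed

lemma wills_lev:
  assumes "strict_mono_on {0..} u" "X \<noteq> {}" "convex E" "0 \<in> interior E"
  shows "wills u X E = (\<integral>\<^sup>+s. indicator {0<..} s * emeasure lborel (lev u E X s) \<partial>lborel)"
    and "(\<lambda>s. indicator {0<..} s * emeasure lborel (lev u E X s)) \<in> borel_measurable lborel"
proof -
  have m: "(\<lambda>x. phi u (gdist E x X)) \<in> borel_measurable borel" by (rule phi_borel[OF assms])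
  show "wills u X E = (\<integral>\<^sup>+s. indicator {0<..} s * emeasure lborel (lev u E X s) \<partial>lborel)"
    unfolding wills_phi lev_def by (rule layer_cake[OF m]) (simp add: phi_pos less_imp_le)
  show "(\<lambda>s. indicator {0<..} s * emeasure lborel (lev u E X s)) \<in> borel_measurable lborel"
    unfolding lev_def by (rule layer_meas[OF m])
qed

lemma wills_comb:
  fixes K L M E :: "'a::euclidean_space set"
  assumes u: "strict_mono_on {0..} u" and K: "convex_body K" and L: "convex_body L"
    and E: "convex_body E" and E0: "0 \<in> interior E"
    and ab: "\<alpha> > 0" "\<beta> > 0" "\<alpha> + \<beta> \<le> 1" and Mne: "M \<noteq> {}"
    and M: "\<And>k l. k \<in> K \<Longrightarrow> l \<in> L \<Longrightarrow> \<alpha> *\<^sub>R k + \<beta> *\<^sub>R l \<in> M"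
  shows "ennreal (\<alpha> ^ DIM('a)) * wills u K E + ennreal (\<beta> ^ DIM('a)) * wills u L E \<le> wills u M E"
proof -
  have Kc: "K \<noteq> {}" "convex K" "bounded K" using K by (auto simp: convex_body_def compact_imp_bounded)
  have Lc: "L \<noteq> {}" "convex L" "bounded L" using L by (auto simp: convex_body_def compact_imp_bounded)
  have Ec: "convex E" "bounded E" using E by (auto simp: convex_body_def compact_imp_bounded)
  define mK where "mK s = indicator {0<..} s * emeasure lborel (lev u E K s)" for s
  define mL where "mL s = indicator {0<..} s * emeasure lborel (lev u E L s)" for s
  define mM where "mM s = indicator {0<..} s * emeasure lborel (lev u E M s)" for s
  note wK = wills_lev[OF u Kc(1) Ec(1) E0, folded mK_def]
  note wL = wills_lev[OF u Lc(1) Ec(1) E0, folded mL_def]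
  note wM = wills_lev[OF u Mne Ec(1) E0, folded mM_def]
  have pw: "ennreal (\<alpha> ^ DIM('a)) * mK s + ennreal (\<beta> ^ DIM('a)) * mL s \<le> mM s" for s
  proof (cases "0 < s")
    case False then show ?thesis by (simp add: mK_def mL_def mM_def)
  next
    case s: True
    show ?thesis
    proof (cases "phi u 0 \<le> s")
      case True
      then have "lev u E K s = {}" "lev u E L s = {}" using lev_empty[OF u E0] Kc Lc by auto
      then show ?thesis by (simp add: mK_def mL_def)
    next
      case False
      then have s0: "s < phi u 0" by simp
      show ?thesis
      proof (cases "\<exists>T\<ge>0. phi u T \<le> s")
        case True
        then obtain T where T: "T \<ge> 0" "phi u T \<le> s" by blast
        have "ennreal (\<alpha> ^ DIM('a)) * emeasure lborel (lev u E K s) + ennreal (\<beta> ^ DIM('a)) * emeasure lborel (lev u E L s)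
              \<le> emeasure lborel (lev u E M s)"
        proof (rule bm_sum)
          show "convex (lev u E K s)" by (rule lev_convex[OF u Ec(1) E0 Kc(2,1)])
          show "convex (lev u E L s)" by (rule lev_convex[OF u Ec(1) E0 Lc(2,1)])
          show "bounded (lev u E K s)" by (rule lev_bounded[OF u E0 Kc(1) Kc(3) Ec(2) T])
          show "bounded (lev u E L s)" by (rule lev_bounded[OF u E0 Lc(1) Lc(3) Ec(2) T])
          show "lev u E K s \<noteq> {}" by (rule lev_nonempty[OF E0 Kc(1) s0])
          show "lev u E L s \<noteq> {}" by (rule lev_nonempty[OF E0 Lc(1) s0])
          show "lev u E K s \<in> sets lborel" by (rule lev_sets[OF u Kc(1) Ec(1) E0])
          show "lev u E L s \<in> sets lborel" by (rule lev_sets[OF u Lc(1) Ec(1) E0])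
          show "lev u E M s \<in> sets lborel" by (rule lev_sets[OF u Mne Ec(1) E0])
          fix x y assume "x \<in> lev u E K s" "y \<in> lev u E L s"
          then show "\<alpha> *\<^sub>R x + \<beta> *\<^sub>R y \<in> lev u E M s"
            using lev_comb[OF u Ec(1) E0 _ _ ab(3) Kc(1) Lc(1) Mne M] ab by auto
        qed (use ab in auto)
        then show ?thesis using s by (simp add: mK_def mL_def mM_def)
      next
        case False
        then have "\<forall>T\<ge>0. s < phi u T" using not_le by blast
        then have "lev u E M s = UNIV" by (rule lev_univ[OF u E0 Mne])
        then show ?thesis using s by (simp add: mM_def)
      qed
    qed
  qed
  have "ennreal (\<alpha> ^ DIM('a)) * wills u K E + ennreal (\<beta> ^ DIM('a)) * wills u L E
      = (\<integral>\<^sup>+s. ennreal (\<alpha> ^ DIM('a)) * mK s + ennreal (\<beta> ^ DIM('a)) * mL s \<partial>lborel)"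
    using wK wL by (simp add: nn_integral_add nn_integral_cmult)
  also have "\<dots> \<le> (\<integral>\<^sup>+s. mM s \<partial>lborel)" by (intro nn_integral_mono pw)
  also have "\<dots> = wills u M E" using wM by simp
  finally show ?thesis .
qed



lemma pow_sum_le:
  fixes x y :: real
  assumes "0 \<le> x" "0 \<le> y"
  shows "(x + y) ^ Suc n \<le> 2 ^ n * (x ^ Suc n + y ^ Suc n)"
proof (induction n)
  case 0 then show ?case by simp
next
  case (Suc n)
  have cheb: "x * y ^ Suc n + y * x ^ Suc n \<le> x ^ Suc (Suc n) + y ^ Suc (Suc n)"
  proof -
    have "0 \<le> (x - y) * (x ^ Suc n - y ^ Suc n)"
    proof (cases "x \<le> y")
      case True
      then have "x ^ Suc n \<le> y ^ Suc n" using assms by (intro power_mono) auto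
      then show ?thesis using True by (intro mult_nonpos_nonpos) auto
    next
      case False
      then have "y ^ Suc n \<le> x ^ Suc n" using assms by (intro power_mono) auto
      then show ?thesis using False by (intro mult_nonneg_nonneg) auto
    qed
    then show ?thesis by (simp add: algebra_simps)
  qed
  have "(x + y) ^ Suc (Suc n) = (x + y) * (x + y) ^ Suc n" by simp
  also have "\<dots> \<le> (x + y) * (2 ^ n * (x ^ Suc n + y ^ Suc n))"
    using Suc assms by (intro mult_left_mono) auto
  also have "\<dots> = 2 ^ n * ((x + y) * (x ^ Suc n + y ^ Suc n))" by simp
  also have "\<dots> \<le> 2 ^ n * (2 * (x ^ Suc (Suc n) + y ^ Suc (Suc n)))"
    using cheb by (intro mult_left_mono) (auto simp: algebra_simps)
  also have "\<dots> = 2 ^ Suc n * (x ^ Suc (Suc n) + y ^ Suc (Suc n))" by simp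
  finally show ?case .
qed

lemma two_pow_fact: "(2::real) ^ n \<le> fact (Suc n)"
proof (induction n)
  case 0 then show ?case by simp
next
  case (Suc n)
  have "(2::real) ^ Suc n = 2 * 2 ^ n" by simp
  also have "\<dots> \<le> real (Suc (Suc n)) * fact (Suc n)"
    using Suc by (intro mult_mono) auto
  also have "\<dots> = fact (Suc (Suc n))" by simp
  finally show ?case .
qed

lemma young_sum:
  fixes p lam mu :: real
  assumes "p > 1" "0 < lam" "lam < 1" "0 < mu" "mu < 1"
  shows "(1 - mu) powr (1 / (p / (p - 1))) * (1 - lam) powr (1 / p)
         + mu powr (1 / (p / (p - 1))) * lam powr (1 / p) \<le> 1"
proof -
  have w: "1 / (p / (p - 1)) + 1 / p = 1" using assms by (simp add: field_simps)
  have w0: "0 \<le> 1 / (p / (p - 1))" "0 \<le> 1 / p" using assms by auto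
  have 1: "(1 - mu) powr (1 / (p / (p - 1))) * (1 - lam) powr (1 / p)
           \<le> 1 / (p / (p - 1)) * (1 - mu) + 1 / p * (1 - lam)"
    by (rule Youngs_inequality_0[OF w0 w]) (use assms in auto)
  have 2: "mu powr (1 / (p / (p - 1))) * lam powr (1 / p) \<le> 1 / (p / (p - 1)) * mu + 1 / p * lam"
    by (rule Youngs_inequality_0[OF w0 w]) (use assms in auto)
  have "1 / (p / (p - 1)) * (1 - mu) + 1 / p * (1 - lam) + (1 / (p / (p - 1)) * mu + 1 / p * lam)
        = 1 / (p / (p - 1)) + 1 / p"
  proof -
    have "\<And>c d::real. c * (1 - mu) + d * (1 - lam) + (c * mu + d * lam) = c + d" by (simp add: algebra_simps)
    then show ?thesis by blast
  qed
  then show ?thesis using 1 2 w by linarith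
qed



lemma choose_mu:
  fixes a0 b0 lam p :: real and n :: nat
  assumes a0: "a0 > 0" and b0: "b0 > 0" and lam: "0 < lam" "lam < 1" and p: "p > 1" and n: "n > 0"
  shows "\<exists>mu. 0 < mu \<and> mu < 1 \<and>
    ((1 - lam) * a0 powr (p / n) + lam * b0 powr (p / n)) powr (n / p) / 2 ^ (n - 1)
    \<le> ((1 - mu) powr (1 / (p / (p - 1))) * (1 - lam) powr (1 / p)) ^ n * a0
     + (mu powr (1 / (p / (p - 1))) * lam powr (1 / p)) ^ n * b0"
proof -
  define iq where "iq = 1 / (p / (p - 1))"
  define ip where "ip = 1 / p"
  have iqp: "iq + ip = 1" using p by (simp add: iq_def ip_def field_simps)
  define A where "A = a0 powr (1 / n)"
  define B where "B = b0 powr (1 / n)"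
  have A0: "A > 0" "B > 0" using a0 b0 by (auto simp: A_def B_def)
  have ApA: "A powr p = a0 powr (p / n)" "B powr p = b0 powr (p / n)"
    by (simp_all add: A_def B_def powr_powr)
  have An: "A ^ n = a0" "B ^ n = b0"
  proof -
    have "A ^ n = A powr (real n)" using A0 by (simp add: powr_realpow)
    also have "\<dots> = a0" using n a0 by (simp add: A_def powr_powr)
    finally show "A ^ n = a0" .
    have "B ^ n = B powr (real n)" using A0 by (simp add: powr_realpow)
    also have "\<dots> = b0" using n b0 by (simp add: B_def powr_powr)
    finally show "B ^ n = b0" .
  qed
  define S where "S = (1 - lam) * A powr p + lam * B powr p"
  have S0: "S > 0" using lam A0 by (simp add: S_def add_pos_pos)
  define X where "X = (1 - lam) * A powr p / S"
  define Y where "Y = lam * B powr p / S"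
  have XY: "X > 0" "Y > 0" "X + Y = 1" using S0 lam A0
    by (auto simp: X_def Y_def S_def add_divide_distrib[symmetric])
  have invp: "\<And>z::real. z > 0 \<Longrightarrow> (z powr p) powr ip = z" using p by (simp add: powr_powr ip_def)
  have aA: "(X powr iq * (1 - lam) powr ip) * A = X * S powr ip"
  proof -
    have "X * S / (1 - lam) = A powr p" using S0 lam by (simp add: X_def)
    then have "A = (X * S / (1 - lam)) powr ip" using invp[OF A0(1)] by simp
    then have "(X powr iq * (1 - lam) powr ip) * A
      = X powr iq * (1 - lam) powr ip * (X powr ip * S powr ip / (1 - lam) powr ip)"
      by (simp add: powr_divide powr_mult)
    also have "\<dots> = X powr (iq + ip) * S powr ip" using lam by (simp add: powr_add)
    also have "\<dots> = X * S powr ip" using iqp XY by simp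
    finally show ?thesis .
  qed
  have bB: "(Y powr iq * lam powr ip) * B = Y * S powr ip"
  proof -
    have "Y * S / lam = B powr p" using S0 lam by (simp add: Y_def)
    then have "B = (Y * S / lam) powr ip" using invp[OF A0(2)] by simp
    then have "(Y powr iq * lam powr ip) * B
      = Y powr iq * lam powr ip * (Y powr ip * S powr ip / lam powr ip)"
      by (simp add: powr_divide powr_mult)
    also have "\<dots> = Y powr (iq + ip) * S powr ip" using lam by (simp add: powr_add)
    also have "\<dots> = Y * S powr ip" using iqp XY by simp
    finally show ?thesis .
  qed
  have mu: "1 - Y = X" using XY by simp
  obtain m where m: "n = Suc m" using n gr0_implies_Suc by blast
  have Sn: "(S powr ip) ^ n = S powr (n / p)"
  proof -
    have "(S powr ip) ^ n = (S powr ip) powr (real n)" using S0 by (simp add: powr_realpow)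
    also have "\<dots> = S powr (n / p)" by (simp add: powr_powr ip_def)
    finally show ?thesis .
  qed
  have "S powr (n / p) = (X * S powr ip + Y * S powr ip) ^ n"
    using XY Sn by (simp add: distrib_right[symmetric])
  also have "\<dots> \<le> 2 ^ (n - 1) * ((X * S powr ip) ^ n + (Y * S powr ip) ^ n)"
    using pow_sum_le[of "X * S powr ip" "Y * S powr ip" m] XY m by simp
  finally have main: "S powr (n / p) / 2 ^ (n - 1) \<le> (X * S powr ip) ^ n + (Y * S powr ip) ^ n"
    by (simp add: divide_le_eq mult.commute)
  have eq: "((1 - Y) powr iq * (1 - lam) powr ip) ^ n * a0 + (Y powr iq * lam powr ip) ^ n * b0
      = (X * S powr ip) ^ n + (Y * S powr ip) ^ n"
    unfolding mu An(1)[symmetric] An(2)[symmetric] power_mult_distrib[symmetric] aA bB ..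
  have SS: "S = (1 - lam) * a0 powr (p / n) + lam * b0 powr (p / n)" using ApA by (simp add: S_def)
  show ?thesis
    apply (rule exI[of _ Y])
    using XY main eq SS unfolding iq_def ip_def by auto
qed



lemma wills_pos:
  assumes "strict_mono_on {0..} u" "X \<noteq> {}" "convex E" "0 \<in> interior E"
  shows "wills u X E \<noteq> 0"
proof
  assume h: "wills u X E = 0"
  have [measurable]: "(\<lambda>x. phi u (gdist E x X)) \<in> borel_measurable borel" by (rule phi_borel[OF assms])
  have "(\<lambda>x. ennreal (phi u (gdist E x X))) \<in> borel_measurable lborel" by measurable
  then have "AE x in lborel. ennreal (phi u (gdist E x X)) = 0"
    using h unfolding wills_phi by (simp add: nn_integral_0_iff_AE)
  then obtain N where N: "{x \<in> space lborel. \<not> ennreal (phi u (gdist E x X)) = 0} \<subseteq> N"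
      "emeasure lborel N = 0" "N \<in> sets lborel" by (rule AE_E)
  have "\<And>x. \<not> ennreal (phi u (gdist E x X)) = 0" by (simp add: ennreal_eq_0_iff not_le phi_pos)
  then have "UNIV \<subseteq> N" using N(1) by auto
  then have "emeasure lborel (UNIV :: 'a set) \<le> emeasure lborel N" using N by (intro emeasure_mono) auto
  then show False using N by simp
qed

theorem mainTheorem13:
  fixes K L E :: "'a::euclidean_space set" and u :: "real \<Rightarrow> real" and p lam :: real
  assumes "convex_body K" and "convex_body L" and "convex_body E"
    and "0 \<in> interior E"
    and "strict_mono_on {0..} u"
    and "p > 1"
    and "0 < lam" and "lam < 1"
  shows "epowr (wills u (lp_comb p lam K L) E) (p / DIM('a)) \<ge>
    ennreal (1 / (fact DIM('a) powr (p / DIM('a)))) *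
      (ennreal (1 - lam) * epowr (wills u K E) (p / DIM('a))
       + ennreal lam * epowr (wills u L E) (p / DIM('a)))"
proof -
  note K = assms(1) and L = assms(2) and E = assms(3) and E0 = assms(4) and u = assms(5)
    and p = assms(6) and lam = assms(7,8)
  define n where "n = DIM('a)"
  have n0: "n > 0" by (simp add: n_def)
  define r where "r = p / n"
  have r0: "r > 0" using p n0 by (simp add: r_def)
  have Kc: "K \<noteq> {}" using K by (auto simp: convex_body_def)
  have Lc: "L \<noteq> {}" using L by (auto simp: convex_body_def)
  have Ec: "convex E" using E by (auto simp: convex_body_def)
  define M where "M = lp_comb p lam K L"
  define al where "al mu = (1 - mu) powr (1 / (p / (p - 1))) * (1 - lam) powr (1 / p)" for mu :: real
  define be where "be mu = mu powr (1 / (p / (p - 1))) * lam powr (1 / p)" for mu :: real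
  have incl: "al mu *\<^sub>R k + be mu *\<^sub>R l \<in> M" if "0 \<le> mu" "mu \<le> 1" "k \<in> K" "l \<in> L" for mu k l
  proof -
    have "al mu *\<^sub>R k + be mu *\<^sub>R l = (1 - mu) powr (1 / (p / (p - 1))) *\<^sub>R ((1 - lam) powr (1 / p) *\<^sub>R k)
          + mu powr (1 / (p / (p - 1))) *\<^sub>R (lam powr (1 / p) *\<^sub>R l)"
      by (simp add: al_def be_def)
    then show ?thesis unfolding M_def lp_comb_def Let_def using that by blast
  qed
  have Mne: "M \<noteq> {}"
  proof -
    obtain k l where "k \<in> K" "l \<in> L" using Kc Lc by blast
    then have "al 0 *\<^sub>R k + be 0 *\<^sub>R l \<in> M" by (intro incl) auto
    then show ?thesis by blast
  qed
  have comb: "ennreal (al mu ^ n) * wills u K E + ennreal (be mu ^ n) * wills u L E \<le> wills u M E"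
    if "0 < mu" "mu < 1" for mu
  proof (unfold n_def, rule wills_comb[OF u K L E E0 _ _ _ Mne])
    show "0 < al mu" "0 < be mu" using that lam by (auto simp: al_def be_def)
    show "al mu + be mu \<le> 1" using young_sum[OF p lam that] by (simp add: al_def be_def)
  qed (use incl that in auto)
  show ?thesis
  proof (cases "wills u K E = \<infinity> \<or> wills u L E = \<infinity>")
    case True
    have "0 < al (1/2)" "0 < be (1/2)" using lam by (auto simp: al_def be_def)
    then have "wills u M E = \<infinity>" using comb[of "1/2"] True
      by (auto simp: ennreal_mult_top top_unique)
    then show ?thesis by (simp add: M_def epowr_def n_def)
  next
    case False
    define a0 where "a0 = enn2real (wills u K E)"
    define b0 where "b0 = enn2real (wills u L E)"
    have wK: "wills u K E = ennreal a0" using False by (simp add: a0_def ennreal_enn2real_if)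
    have wL: "wills u L E = ennreal b0" using False by (simp add: b0_def ennreal_enn2real_if)
    have a0: "a0 > 0"
    proof -
      have "ennreal a0 \<noteq> 0" using wills_pos[OF u Kc Ec E0] unfolding wK .
      moreover have "a0 \<ge> 0" unfolding a0_def by simp
      ultimately show ?thesis by (simp add: ennreal_eq_0_iff)
    qed
    have b0: "b0 > 0"
    proof -
      have "ennreal b0 \<noteq> 0" using wills_pos[OF u Lc Ec E0] unfolding wL .
      moreover have "b0 \<ge> 0" unfolding b0_def by simp
      ultimately show ?thesis by (simp add: ennreal_eq_0_iff)
    qed
    have eK: "epowr (wills u K E) r = ennreal (a0 powr r)" using False by (simp add: epowr_def a0_def)
    have eL: "epowr (wills u L E) r = ennreal (b0 powr r)" using False by (simp add: epowr_def b0_def)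
    define S where "S = (1 - lam) * a0 powr r + lam * b0 powr r"
    have S0: "S > 0" using lam a0 b0 by (simp add: S_def add_pos_pos)
    have rhs: "ennreal (1 / (fact n powr r)) * (ennreal (1 - lam) * ennreal (a0 powr r) + ennreal lam * ennreal (b0 powr r))
        = ennreal (S / fact n powr r)"
    proof -
      have f0: "fact n powr r > 0" by simp
      have "ennreal (1 - lam) * ennreal (a0 powr r) = ennreal ((1 - lam) * a0 powr r)"
        using lam by (intro ennreal_mult[symmetric]) auto
      moreover have "ennreal lam * ennreal (b0 powr r) = ennreal (lam * b0 powr r)"
        using lam by (intro ennreal_mult[symmetric]) auto
      moreover have "ennreal ((1 - lam) * a0 powr r) + ennreal (lam * b0 powr r) = ennreal S"
        unfolding S_def using lam by (intro ennreal_plus[symmetric]) auto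
      moreover have "ennreal (1 / (fact n powr r)) * ennreal S = ennreal (1 / (fact n powr r) * S)"
        using S0 f0 by (intro ennreal_mult[symmetric]) auto
      moreover have "1 / (fact n powr r) * S = S / fact n powr r" by simp
      ultimately show ?thesis by simp
    qed
    obtain mu where mu: "0 < mu" "mu < 1"
      "S powr (n / p) / 2 ^ (n - 1) \<le> al mu ^ n * a0 + be mu ^ n * b0"
      using choose_mu[OF a0 b0 lam p n0] unfolding al_def[symmetric] be_def[symmetric] S_def r_def by blast
    define G where "G = al mu ^ n * a0 + be mu ^ n * b0"
    have "ennreal G \<le> wills u M E"
    proof -
      have "ennreal G = ennreal (al mu ^ n) * wills u K E + ennreal (be mu ^ n) * wills u L E"
        using a0 b0 mu by (simp add: G_def wK wL ennreal_mult ennreal_plus al_def be_def)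
      then show ?thesis using comb[OF mu(1,2)] by simp
    qed
    show ?thesis
    proof (cases "wills u M E = \<infinity>")
      case True then show ?thesis by (simp add: M_def epowr_def)
    next
      case False
      define w where "w = enn2real (wills u M E)"
      have wM: "wills u M E = ennreal w" using False by (simp add: w_def ennreal_enn2real_if)
      have G0: "G \<ge> 0" using a0 b0 by (simp add: G_def al_def be_def)
      have w0: "w \<ge> 0" by (simp add: w_def)
      have Gw: "G \<le> w" using \<open>ennreal G \<le> wills u M E\<close> wM G0 w0 by (auto simp: ennreal_le_iff2)
      obtain m where m: "n = Suc m" using n0 gr0_implies_Suc by blast
      have f2: "(2::real) ^ (n - 1) \<le> fact n" using two_pow_fact[of m] m by simp
      have "S / fact n powr r \<le> S / (2 ^ (n - 1)) powr r"
        using S0 f2 r0 by (intro divide_left_mono powr_mono2 mult_pos_pos) auto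
      also have "\<dots> = (S powr (n / p) / 2 ^ (n - 1)) powr r"
        using S0 p n0 by (simp add: powr_divide powr_powr r_def)
      also have "\<dots> \<le> G powr r"
        using mu(3) r0 by (intro powr_mono2) (auto simp: G_def)
      also have "\<dots> \<le> w powr r" using Gw G0 r0 by (intro powr_mono2) auto
      finally have fin: "S / fact n powr r \<le> w powr r" .
      have "epowr (wills u M E) r = ennreal (w powr r)" using False by (simp add: epowr_def w_def)
      then show ?thesis using fin rhs eK eL
        unfolding M_def[symmetric] r_def[symmetric] n_def[symmetric]
        by (simp add: ennreal_leI)
    qed
  qed
qed

end
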